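(* An integral domain $D$ is a $\ast$-SH domain of type $1$ if and only if $D$ is a $\ast$-weakly Krull domain.
   Context: $\ast$ is a star operation on $D$ of finite character. A $\ast$-ideal is a nonzero fractional ideal $I$ with $I^\ast=I$; it is of finite type if $I=J^\ast$ for some nonzero finitely generated $J$. A maximal $\ast$-ideal is an integral $\ast$-ideal maximal among proper integral $\ast$-ideals. A $\ast$-homog ideal is an integral $\ast$-ideal $I$ of finite type with $I\subsetneq D$ such that $(J+L)^{\ast}\neq D$ for every pair $J,L$ of proper integral $\ast$-ideals of finite type containing $I$; such $I$ lies in a unique maximal $\ast$-ideal $M(I)$. $D$ is a $\ast$-SH domain if every $xD$, $x$ a nonzero nonunit, is a $\ast$-product $(I_1\cdots I_n)^\ast$ of finitely many $\ast$-homog ideals. A $\ast$-homog ideal $I$ is of type $1$ if for every $x\in M(I)\setminus\{0\}$ there is a positive integer $n$ with $x^nD_{M(I)}\cap D\subseteq I$. $D$ is a $\ast$-SH domain of type $1$ if for every nonzero nonunit $x$, $xD$ is a $\ast$-product of finitely many $\ast$-homog ideals of type $1$. $D$ is a $\ast$-weakly Krull domain if $D$ is a $\ast$-SH domain in which every maximal $\ast$-ideal has height $1$. *)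

theory Defs
  imports Main
begin

text \<open>An integral domain D is modelled as a subring of a field of type 'k
  which is its quotient field. Fractional ideals are D-submodules of 'k.\<close>

definition subring_of_field :: "'k::field set \<Rightarrow> bool" where
  "subring_of_field D \<longleftrightarrow> 0 \<in> D \<and> 1 \<in> D \<and>
     (\<forall>a\<in>D. \<forall>b\<in>D. a + b \<in> D \<and> a - b \<in> D \<and> a * b \<in> D)"

definition quotient_field_of :: "'k::field set \<Rightarrow> bool" where
  "quotient_field_of D \<longleftrightarrow> (\<forall>k. \<exists>a\<in>D. \<exists>b\<in>D. b \<noteq> 0 \<and> k = a / b)"

definition integral_domain_qf :: "'k::field set \<Rightarrow> bool" where
  "integral_domain_qf D \<longleftrightarrow> subring_of_field D \<and> quotient_field_of D"

definition is_unit_in :: "'k::field set \<Rightarrow> 'k \<Rightarrow> bool" where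
  "is_unit_in D x \<longleftrightarrow> x \<in> D \<and> (\<exists>y\<in>D. x * y = 1)"

definition gen :: "'k::field set \<Rightarrow> 'k set \<Rightarrow> 'k set" where
  "gen D S = {x. \<exists>F a. finite F \<and> F \<subseteq> S \<and> (\<forall>s\<in>F. a s \<in> D) \<and> x = (\<Sum>s\<in>F. a s * s)}"

definition principal :: "'k::field set \<Rightarrow> 'k \<Rightarrow> 'k set" where
  "principal D x = (\<lambda>d. x * d) ` D"

definition smult_set :: "'k::field \<Rightarrow> 'k set \<Rightarrow> 'k set" where
  "smult_set x I = (\<lambda>i. x * i) ` I"

definition submodule :: "'k::field set \<Rightarrow> 'k set \<Rightarrow> bool" where
  "submodule D I \<longleftrightarrow> 0 \<in> I \<and> (\<forall>a\<in>I. \<forall>b\<in>I. a + b \<in> I) \<and> (\<forall>d\<in>D. \<forall>a\<in>I. d * a \<in> I)"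

definition frac_ideal :: "'k::field set \<Rightarrow> 'k set \<Rightarrow> bool" where
  "frac_ideal D I \<longleftrightarrow> submodule D I \<and> I \<noteq> {0} \<and>
     (\<exists>d\<in>D. d \<noteq> 0 \<and> (\<forall>a\<in>I. d * a \<in> D))"

definition finitely_generated :: "'k::field set \<Rightarrow> 'k set \<Rightarrow> bool" where
  "finitely_generated D I \<longleftrightarrow> (\<exists>F. finite F \<and> I = gen D F)"

definition star_operation :: "'k::field set \<Rightarrow> ('k set \<Rightarrow> 'k set) \<Rightarrow> bool" where
  "star_operation D star \<longleftrightarrow>
     (\<forall>I. frac_ideal D I \<longrightarrow> frac_ideal D (star I)) \<and>
     (\<forall>x. x \<noteq> 0 \<longrightarrow> star (principal D x) = principal D x) \<and>
     (\<forall>x I. x \<noteq> 0 \<longrightarrow> frac_ideal D I \<longrightarrow> star (smult_set x I) = smult_set x (star I)) \<and>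
     (\<forall>I. frac_ideal D I \<longrightarrow> I \<subseteq> star I) \<and>
     (\<forall>I J. frac_ideal D I \<longrightarrow> frac_ideal D J \<longrightarrow> I \<subseteq> J \<longrightarrow> star I \<subseteq> star J) \<and>
     (\<forall>I. frac_ideal D I \<longrightarrow> star (star I) = star I)"

definition finite_character :: "'k::field set \<Rightarrow> ('k set \<Rightarrow> 'k set) \<Rightarrow> bool" where
  "finite_character D star \<longleftrightarrow>
     (\<forall>I. frac_ideal D I \<longrightarrow>
        star I = \<Union>{star J | J. J \<subseteq> I \<and> J \<noteq> {0} \<and> finitely_generated D J})"

definition star_ideal :: "'k::field set \<Rightarrow> ('k set \<Rightarrow> 'k set) \<Rightarrow> 'k set \<Rightarrow> bool" where
  "star_ideal D star I \<longleftrightarrow> frac_ideal D I \<and> star I = I"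

definition finite_type :: "'k::field set \<Rightarrow> ('k set \<Rightarrow> 'k set) \<Rightarrow> 'k set \<Rightarrow> bool" where
  "finite_type D star I \<longleftrightarrow>
     (\<exists>J. J \<noteq> {0} \<and> finitely_generated D J \<and> I = star J)"

definition integral_star_ideal :: "'k::field set \<Rightarrow> ('k set \<Rightarrow> 'k set) \<Rightarrow> 'k set \<Rightarrow> bool" where
  "integral_star_ideal D star I \<longleftrightarrow> star_ideal D star I \<and> I \<subseteq> D"

definition maximal_star_ideal :: "'k::field set \<Rightarrow> ('k set \<Rightarrow> 'k set) \<Rightarrow> 'k set \<Rightarrow> bool" where
  "maximal_star_ideal D star M \<longleftrightarrow>
     integral_star_ideal D star M \<and> M \<noteq> D \<and>
     (\<forall>N. integral_star_ideal D star N \<and> N \<noteq> D \<and> M \<subseteq> N \<longrightarrow> N = M)"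

definition ideal_sum :: "'k::field set \<Rightarrow> 'k set \<Rightarrow> 'k set" where
  "ideal_sum J L = {j + l | j l. j \<in> J \<and> l \<in> L}"

definition ideal_prod :: "'k::field set \<Rightarrow> 'k set \<Rightarrow> 'k set \<Rightarrow> 'k set" where
  "ideal_prod D J L = gen D {j * l | j l. j \<in> J \<and> l \<in> L}"

definition ideal_prod_list :: "'k::field set \<Rightarrow> 'k set list \<Rightarrow> 'k set" where
  "ideal_prod_list D Is = foldr (ideal_prod D) Is D"

definition star_homog :: "'k::field set \<Rightarrow> ('k set \<Rightarrow> 'k set) \<Rightarrow> 'k set \<Rightarrow> bool" where
  "star_homog D star I \<longleftrightarrow>
     integral_star_ideal D star I \<and> finite_type D star I \<and> I \<noteq> D \<and>
     (\<forall>J L. integral_star_ideal D star J \<and> finite_type D star J \<and> J \<noteq> D \<and> I \<subseteq> J \<and>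
            integral_star_ideal D star L \<and> finite_type D star L \<and> L \<noteq> D \<and> I \<subseteq> L
            \<longrightarrow> star (ideal_sum J L) \<noteq> D)"

text \<open>The unique maximal star ideal containing a star-homog ideal.\<close>
definition M_of :: "'k::field set \<Rightarrow> ('k set \<Rightarrow> 'k set) \<Rightarrow> 'k set \<Rightarrow> 'k set" where
  "M_of D star I = (THE M. maximal_star_ideal D star M \<and> I \<subseteq> M)"

definition localization :: "'k::field set \<Rightarrow> 'k set \<Rightarrow> 'k set" where
  "localization D P = {a / s | a s. a \<in> D \<and> s \<in> D \<and> s \<notin> P}"

definition star_homog_type1 :: "'k::field set \<Rightarrow> ('k set \<Rightarrow> 'k set) \<Rightarrow> 'k set \<Rightarrow> bool" where
  "star_homog_type1 D star I \<longleftrightarrow> star_homog D star I \<and>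
     (\<forall>x \<in> M_of D star I - {0}. \<exists>n::nat. n > 0 \<and>
        smult_set (x ^ n) (localization D (M_of D star I)) \<inter> D \<subseteq> I)"

definition star_SH :: "'k::field set \<Rightarrow> ('k set \<Rightarrow> 'k set) \<Rightarrow> bool" where
  "star_SH D star \<longleftrightarrow>
     (\<forall>x\<in>D. x \<noteq> 0 \<and> \<not> is_unit_in D x \<longrightarrow>
        (\<exists>Is. (\<forall>I\<in>set Is. star_homog D star I) \<and>
              principal D x = star (ideal_prod_list D Is)))"

definition star_SH_type1 :: "'k::field set \<Rightarrow> ('k set \<Rightarrow> 'k set) \<Rightarrow> bool" where
  "star_SH_type1 D star \<longleftrightarrow>
     (\<forall>x\<in>D. x \<noteq> 0 \<and> \<not> is_unit_in D x \<longrightarrow>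
        (\<exists>Is. (\<forall>I\<in>set Is. star_homog_type1 D star I) \<and>
              principal D x = star (ideal_prod_list D Is)))"

definition prime_ideal :: "'k::field set \<Rightarrow> 'k set \<Rightarrow> bool" where
  "prime_ideal D P \<longleftrightarrow> submodule D P \<and> P \<subseteq> D \<and> P \<noteq> D \<and>
     (\<forall>a\<in>D. \<forall>b\<in>D. a * b \<in> P \<longrightarrow> a \<in> P \<or> b \<in> P)"

definition height_one :: "'k::field set \<Rightarrow> 'k set \<Rightarrow> bool" where
  "height_one D P \<longleftrightarrow> prime_ideal D P \<and> P \<noteq> {0} \<and>
     (\<forall>Q. prime_ideal D Q \<and> Q \<subseteq> P \<longrightarrow> Q = {0} \<or> Q = P)"

definition star_weakly_Krull :: "'k::field set \<Rightarrow> ('k set \<Rightarrow> 'k set) \<Rightarrow> bool" where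
  "star_weakly_Krull D star \<longleftrightarrow> star_SH D star \<and>
     (\<forall>M. maximal_star_ideal D star M \<longrightarrow> height_one D M)"

end

theory Submission
  imports Defs
begin



locale SD =
  fixes D :: "'k::field set" and star :: "'k set \<Rightarrow> 'k set"
  assumes dom: "integral_domain_qf D"
    and sop: "star_operation D star"
    and fch: "finite_character D star"
begin

lemma D0: "0 \<in> D" and D1: "1 \<in> D"
  and Dadd: "a \<in> D \<Longrightarrow> b \<in> D \<Longrightarrow> a + b \<in> D"
  and Ddiff: "a \<in> D \<Longrightarrow> b \<in> D \<Longrightarrow> a - b \<in> D"
  and Dmul: "a \<in> D \<Longrightarrow> b \<in> D \<Longrightarrow> a * b \<in> D"
  using dom unfolding integral_domain_qf_def subring_of_field_def by auto

lemma Dqf: "\<exists>a\<in>D. \<exists>b\<in>D. b \<noteq> 0 \<and> k = a / b"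
  using dom unfolding integral_domain_qf_def quotient_field_of_def by auto

lemma st_frac: "frac_ideal D I \<Longrightarrow> frac_ideal D (star I)"
  and st_princ: "x \<noteq> 0 \<Longrightarrow> star (principal D x) = principal D x"
  and st_smult: "x \<noteq> 0 \<Longrightarrow> frac_ideal D I \<Longrightarrow> star (smult_set x I) = smult_set x (star I)"
  and st_ext: "frac_ideal D I \<Longrightarrow> I \<subseteq> star I"
  and st_mono: "frac_ideal D I \<Longrightarrow> frac_ideal D J \<Longrightarrow> I \<subseteq> J \<Longrightarrow> star I \<subseteq> star J"
  and st_idem: "frac_ideal D I \<Longrightarrow> star (star I) = star I"
  using sop unfolding star_operation_def by auto

lemma fc: "frac_ideal D I \<Longrightarrow>
        star I = \<Union>{star J | J. J \<subseteq> I \<and> J \<noteq> {0} \<and> finitely_generated D J}"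
  using fch unfolding finite_character_def by auto

lemma principal1: "principal D 1 = D"
  unfolding principal_def by auto

lemma star_D: "star D = D"
  using st_princ[of 1] principal1 by simp

lemma submodule_D: "submodule D D"
  unfolding submodule_def using D0 Dadd Dmul by auto

lemma frac_D: "frac_ideal D D"
  unfolding frac_ideal_def using submodule_D D0 D1 Dmul
  by (auto intro!: bexI[of _ 1])

lemma frac_integral: "submodule D I \<Longrightarrow> I \<subseteq> D \<Longrightarrow> I \<noteq> {0} \<Longrightarrow> frac_ideal D I"
  unfolding frac_ideal_def using D1 by (auto intro!: bexI[of _ 1])

lemma star_integral: "frac_ideal D I \<Longrightarrow> I \<subseteq> D \<Longrightarrow> star I \<subseteq> D"
  using st_mono[OF _ frac_D, of I] star_D by auto

lemma submodule_sum:
  assumes "submodule D P" "finite F" "\<forall>f\<in>F. g f \<in> P"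
  shows "sum g F \<in> P"
  using assms(2,3)
proof (induction F rule: finite_induct)
  case empty then show ?case using assms(1) unfolding submodule_def by simp
next
  case (insert x F) then show ?case using assms(1) unfolding submodule_def by simp
qed

lemma sum_D: "finite F \<Longrightarrow> \<forall>f\<in>F. g f \<in> D \<Longrightarrow> sum g F \<in> D"
  using submodule_sum[OF submodule_D] by blast

lemma submodule_one: "submodule D P \<Longrightarrow> P \<subseteq> D \<Longrightarrow> 1 \<in> P \<Longrightarrow> P = D"
  unfolding submodule_def by (metis mult.right_neutral subsetI subset_antisym)

lemma gen_incl: "s \<in> S \<Longrightarrow> s \<in> gen D S"
  unfolding gen_def using D1 by (auto intro!: exI[of _ "{s}"] exI[of _ "\<lambda>_. 1"])

lemma gen_mono: "S \<subseteq> T \<Longrightarrow> gen D S \<subseteq> gen D T"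
  unfolding gen_def by blast

lemma gen_least: "submodule D P \<Longrightarrow> S \<subseteq> P \<Longrightarrow> gen D S \<subseteq> P"
  unfolding gen_def
proof clarify
  fix F a assume P: "submodule D P" "S \<subseteq> P" "finite F" "F \<subseteq> S" "\<forall>s\<in>F. a s \<in> D"
  show "(\<Sum>s\<in>F. a s * s) \<in> P"
    by (rule submodule_sum) (use P in \<open>auto simp: submodule_def\<close>)
qed

lemma sum_extend:
  fixes a :: "'k \<Rightarrow> 'k"
  assumes "finite G" "F \<subseteq> G"
  shows "(\<Sum>s\<in>F. a s * s) = (\<Sum>s\<in>G. (if s \<in> F then a s else 0) * s)"
proof -
  have "(\<Sum>s\<in>G. (if s \<in> F then a s else 0) * s) = (\<Sum>s\<in>G. if s \<in> F then a s * s else 0)"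
    by (rule sum.cong) auto
  also have "\<dots> = (\<Sum>s\<in>G \<inter> F. a s * s)" using sum.inter_restrict[OF assms(1), of "\<lambda>s. a s * s" F] by simp
  also have "G \<inter> F = F" using assms by auto
  finally show ?thesis by simp
qed

lemma gen_submodule: "submodule D (gen D S)"
  unfolding submodule_def
proof (intro conjI ballI)
  show "0 \<in> gen D S" unfolding gen_def by (auto intro!: exI[of _ "{}"])
next
  fix x y assume "x \<in> gen D S" "y \<in> gen D S"
  then obtain F1 a1 F2 a2 where h: "finite F1" "F1 \<subseteq> S" "\<forall>s\<in>F1. a1 s \<in> D" "x = (\<Sum>s\<in>F1. a1 s * s)"
    "finite F2" "F2 \<subseteq> S" "\<forall>s\<in>F2. a2 s \<in> D" "y = (\<Sum>s\<in>F2. a2 s * s)"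
    unfolding gen_def by blast
  let ?G = "F1 \<union> F2"
  let ?a = "\<lambda>s. (if s \<in> F1 then a1 s else 0) + (if s \<in> F2 then a2 s else 0)"
  have "x = (\<Sum>s\<in>?G. (if s \<in> F1 then a1 s else 0) * s)" using sum_extend[of ?G F1 a1] h by auto
  moreover have "y = (\<Sum>s\<in>?G. (if s \<in> F2 then a2 s else 0) * s)" using sum_extend[of ?G F2 a2] h by auto
  ultimately have "x + y = (\<Sum>s\<in>?G. ?a s * s)"
    by (simp add: sum.distrib[symmetric] distrib_right)
  moreover have "\<forall>s\<in>?G. ?a s \<in> D" using h D0 Dadd by auto
  ultimately show "x + y \<in> gen D S" unfolding gen_def using h
    by (intro CollectI exI[of _ ?G] exI[of _ ?a]) auto
next
  fix d x assume "d \<in> D" "x \<in> gen D S"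
  then obtain F a where h: "finite F" "F \<subseteq> S" "\<forall>s\<in>F. a s \<in> D" "x = (\<Sum>s\<in>F. a s * s)"
    unfolding gen_def by blast
  have "d * x = (\<Sum>s\<in>F. (d * a s) * s)" using h by (simp add: sum_distrib_left mult.assoc)
  then show "d * x \<in> gen D S" unfolding gen_def using h \<open>d \<in> D\<close> Dmul
    by (intro CollectI exI[of _ F] exI[of _ "\<lambda>s. d * a s"]) auto
qed

lemma common_denom: "finite F \<Longrightarrow> \<exists>d\<in>D. d \<noteq> 0 \<and> (\<forall>f\<in>F. d * f \<in> D)"
proof (induction F rule: finite_induct)
  case empty then show ?case using D1 by (intro bexI[of _ 1]) auto
next
  case (insert f F)
  then obtain d where d: "d \<in> D" "d \<noteq> 0" "\<forall>g\<in>F. d * g \<in> D" by blast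
  obtain a b where ab: "a \<in> D" "b \<in> D" "b \<noteq> 0" "f = a / b" using Dqf by blast
  have "\<forall>g\<in>insert f F. (d * b) * g \<in> D"
  proof
    fix g assume "g \<in> insert f F"
    then show "(d * b) * g \<in> D"
    proof
      assume "g = f" then have "(d*b)*g = d * (b * (a / b))" using ab by (simp add: ac_simps)
      also have "\<dots> = d * a" using ab by simp
      finally have "(d*b)*g = d * a" .
      then show ?thesis using d ab Dmul by metis
    next
      assume "g \<in> F" then have "(d*b)*g = b * (d * g)" by (simp add: ac_simps)
      then show ?thesis using d ab Dmul \<open>g \<in> F\<close> by metis
    qed
  qed
  then show ?case using d ab Dmul by (intro bexI[of _ "d*b"]) auto
qed

lemma fg_frac: "finitely_generated D J \<Longrightarrow> J \<noteq> {0} \<Longrightarrow> frac_ideal D J"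
proof -
  assume "finitely_generated D J" "J \<noteq> {0}"
  then obtain F where F: "finite F" "J = gen D F" unfolding finitely_generated_def by blast
  obtain d where d: "d \<in> D" "d \<noteq> 0" "\<forall>f\<in>F. d * f \<in> D" using common_denom[OF F(1)] by blast
  have "\<forall>x\<in>J. d * x \<in> D"
  proof
    fix x assume "x \<in> J"
    then obtain G a where h: "finite G" "G \<subseteq> F" "\<forall>s\<in>G. a s \<in> D" "x = (\<Sum>s\<in>G. a s * s)"
      using F unfolding gen_def by blast
    have "d * x = (\<Sum>s\<in>G. a s * (d * s))" using h by (simp add: sum_distrib_left ac_simps)
    also have "\<dots> \<in> D" using h d by (intro sum_D) (auto intro: Dmul)
    finally show "d * x \<in> D" .
  qed
  then show ?thesis unfolding frac_ideal_def using gen_submodule F \<open>J \<noteq> {0}\<close> d by auto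
qed

end



context SD begin

lemma gen_empty: "gen D {} = {0}"
  unfolding gen_def by auto

lemma isi_props:
  assumes "integral_star_ideal D star N"
  shows "submodule D N" "N \<subseteq> D" "frac_ideal D N" "star N = N" "0 \<in> N" "N \<noteq> {0}"
proof -
  have f: "frac_ideal D N" "star N = N" "N \<subseteq> D"
    using assms unfolding integral_star_ideal_def star_ideal_def by auto
  then show "frac_ideal D N" "star N = N" "N \<subseteq> D" by auto
  show s: "submodule D N" using f(1) unfolding frac_ideal_def by blast
  then show "0 \<in> N" unfolding submodule_def by blast
  show "N \<noteq> {0}" using f(1) unfolding frac_ideal_def by simp
qed

lemma isi_not1: "integral_star_ideal D star N \<Longrightarrow> N \<noteq> D \<Longrightarrow> 1 \<notin> N"
proof
  assume a: "integral_star_ideal D star N" "N \<noteq> D" "1 \<in> N"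
  have "N = D" by (rule submodule_one[OF isi_props(1)[OF a(1)] isi_props(2)[OF a(1)] a(3)])
  then show False using a(2) by simp
qed

lemma star_isi: "frac_ideal D J \<Longrightarrow> J \<subseteq> D \<Longrightarrow> integral_star_ideal D star (star J)"
  unfolding integral_star_ideal_def star_ideal_def using st_frac st_idem star_integral by auto

lemma max_exists:
  assumes J: "frac_ideal D J" "J \<subseteq> D" "star J \<noteq> D"
  shows "\<exists>N. maximal_star_ideal D star N \<and> star J \<subseteq> N"
proof -
  define A where "A = {N. integral_star_ideal D star N \<and> N \<noteq> D \<and> star J \<subseteq> N}"
  have sJA: "star J \<in> A" unfolding A_def using star_isi[OF J(1,2)] J(3) by auto
  have "\<forall>C\<in>chains A. \<exists>U\<in>A. \<forall>X\<in>C. X \<subseteq> U"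
  proof
    fix C assume C: "C \<in> chains A"
    show "\<exists>U\<in>A. \<forall>X\<in>C. X \<subseteq> U"
    proof (cases "C = {}")
      case True then show ?thesis using sJA by auto
    next
      case False
      have CA: "C \<subseteq> A" and ch: "\<forall>X\<in>C. \<forall>Y\<in>C. X \<subseteq> Y \<or> Y \<subseteq> X"
        using C unfolding chains_def chain_subset_def by auto
      have isiC: "\<And>X. X \<in> C \<Longrightarrow> integral_star_ideal D star X \<and> X \<noteq> D \<and> star J \<subseteq> X"
        using CA unfolding A_def by auto
      let ?U = "\<Union>C"
      obtain X0 where X0: "X0 \<in> C" using False by auto
      have sub: "submodule D ?U"
        unfolding submodule_def
      proof (intro conjI ballI)
        show "0 \<in> ?U" using X0 isiC isi_props by blast
      next
        fix a b assume "a \<in> ?U" "b \<in> ?U"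
        then obtain X Y where XY: "X \<in> C" "Y \<in> C" "a \<in> X" "b \<in> Y" by auto
        show "a + b \<in> ?U"
        proof (cases "X \<subseteq> Y")
          case True then show ?thesis using XY isiC[of Y] isi_props(1)[of Y]
            unfolding submodule_def by blast
        next
          case False then have "Y \<subseteq> X" using ch XY by blast
          then show ?thesis using XY isiC[of X] isi_props(1)[of X]
            unfolding submodule_def by blast
        qed
      next
        fix d a assume "d \<in> D" "a \<in> ?U"
        then obtain X where "X \<in> C" "a \<in> X" by auto
        then show "d * a \<in> ?U" using \<open>d \<in> D\<close> isiC[of X] isi_props(1)[of X]
          unfolding submodule_def by blast
      qed
      have UD: "?U \<subseteq> D" using isiC isi_props by blast
      have sJX0: "star J \<subseteq> X0" using isiC[OF X0] by blast
      then have sJU: "star J \<subseteq> ?U" using X0 by blast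
      have "star J \<noteq> {0}" "0 \<in> star J" using st_frac[OF J(1)] unfolding frac_ideal_def submodule_def by auto
      then have U0: "?U \<noteq> {0}" using sJU by blast
      have fU: "frac_ideal D ?U" using frac_integral[OF sub UD U0] .
      have "star ?U \<subseteq> ?U"
      proof
        fix x assume "x \<in> star ?U"
        then obtain J' where J': "x \<in> star J'" "J' \<subseteq> ?U" "J' \<noteq> {0}" "finitely_generated D J'"
          using fc[OF fU] by blast
        obtain F where F: "finite F" "J' = gen D F" using J'(4) unfolding finitely_generated_def by blast
        have "F \<noteq> {}" using F J'(3) gen_empty by auto
        moreover have "F \<subseteq> ?U" using F(2) J'(2) gen_incl by blast
        moreover have "subset.chain A C" using CA ch unfolding subset.chain_def by auto
        ultimately obtain X where X: "X \<in> C" "F \<subseteq> X"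
          using finite_subset_Union_chain[OF F(1) _ False] by blast
        have iX: "integral_star_ideal D star X" using isiC[OF X(1)] by blast
        have "J' \<subseteq> X" unfolding F(2) by (rule gen_least[OF isi_props(1)[OF iX] X(2)])
        moreover have "frac_ideal D J'" using fg_frac J'(3,4) by blast
        ultimately have "star J' \<subseteq> star X" using st_mono isi_props(3)[OF iX] by blast
        then have "x \<in> X" using J'(1) isi_props(4)[OF iX] by blast
        then show "x \<in> ?U" using X by auto
      qed
      then have "star ?U = ?U" using st_ext[OF fU] by auto
      then have isiU: "integral_star_ideal D star ?U"
        unfolding integral_star_ideal_def star_ideal_def using fU UD by auto
      have "1 \<notin> ?U" using isiC isi_not1 by blast
      then have "?U \<noteq> D" using D1 by auto
      then have "?U \<in> A" unfolding A_def using isiU sJU by auto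
      then show ?thesis by auto
    qed
  qed
  then obtain M where M: "M \<in> A" "\<forall>X\<in>A. M \<subseteq> X \<longrightarrow> X = M" using Zorn_Lemma2[of A] by blast
  have "maximal_star_ideal D star M"
    unfolding maximal_star_ideal_def
  proof (intro conjI allI impI)
    show "integral_star_ideal D star M" "M \<noteq> D" using M unfolding A_def by auto
  next
    fix N assume N: "integral_star_ideal D star N \<and> N \<noteq> D \<and> M \<subseteq> N"
    then have "N \<in> A" using M unfolding A_def by auto
    then show "N = M" using M N by auto
  qed
  then show ?thesis using M unfolding A_def by auto
qed

lemma smult_submodule: "submodule D I \<Longrightarrow> submodule D (smult_set z I)"
  unfolding submodule_def smult_set_def
proof (intro conjI ballI)
  assume I: "0 \<in> I \<and> (\<forall>a\<in>I. \<forall>b\<in>I. a + b \<in> I) \<and> (\<forall>d\<in>D. \<forall>a\<in>I. d * a \<in> I)"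
  show "0 \<in> (*) z ` I" using I by (auto intro!: image_eqI[of _ _ 0])
  fix a b assume "a \<in> (*) z ` I" "b \<in> (*) z ` I"
  then obtain a' b' where "a' \<in> I" "b' \<in> I" "a = z * a'" "b = z * b'" by auto
  then show "a + b \<in> (*) z ` I" using I by (auto simp: distrib_left intro!: image_eqI[of _ _ "a'+b'"])
next
  fix d a
  assume I: "0 \<in> I \<and> (\<forall>a\<in>I. \<forall>b\<in>I. a + b \<in> I) \<and> (\<forall>d\<in>D. \<forall>a\<in>I. d * a \<in> I)"
    and "d \<in> D" "a \<in> (*) z ` I"
  then obtain a' where "a' \<in> I" "a = z * a'" by auto
  then show "d * a \<in> (*) z ` I" using I \<open>d \<in> D\<close> by (auto simp: ac_simps intro!: image_eqI[of _ _ "d*a'"])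
qed

lemma colon_lemma:
  assumes I: "integral_star_ideal D star I" and z: "z \<in> D" and u: "u \<in> D" "u * z \<in> I"
    and notin: "\<forall>N. maximal_star_ideal D star N \<and> I \<subseteq> N \<longrightarrow> u \<notin> N"
  shows "z \<in> I"
proof (cases "z = 0 \<or> I = D")
  case True then show ?thesis using isi_props(5)[OF I] z by auto
next
  case False
  then have zn: "z \<noteq> 0" and ID: "I \<noteq> D" by auto
  note Ip = isi_props[OF I]
  define K where "K = {d\<in>D. d * z \<in> I}"
  have subK: "submodule D K" unfolding K_def submodule_def using Ip(1) D0 Dadd Dmul
    unfolding submodule_def by (auto simp: distrib_right mult.assoc)
  have IK: "I \<subseteq> K" unfolding K_def using Ip(1,2) z unfolding submodule_def
    by (auto simp: mult.commute)
  have KD: "K \<subseteq> D" unfolding K_def by auto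
  have K0: "K \<noteq> {0}" using IK Ip(6) Ip(5) by blast
  have fK: "frac_ideal D K" using frac_integral[OF subK KD K0] .
  have uK: "u \<in> K" unfolding K_def using u by auto
  have sK: "star K = D"
  proof (rule ccontr)
    assume "star K \<noteq> D"
    then obtain N where N: "maximal_star_ideal D star N" "star K \<subseteq> N" using max_exists[OF fK KD] by blast
    have "K \<subseteq> N" using N st_ext[OF fK] by blast
    then show False using notin N IK uK by blast
  qed
  have zKI: "smult_set z K \<subseteq> I" unfolding smult_set_def K_def by (auto simp: mult.commute)
  have zKD: "smult_set z K \<subseteq> D" using zKI Ip(2) by blast
  have "u \<noteq> 0"
  proof
    assume u0: "u = 0"
    show False
    proof -
      obtain N where N: "maximal_star_ideal D star N" "star I \<subseteq> N"
        using max_exists[OF Ip(3) Ip(2)] Ip(4) ID by auto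
      then have "0 \<in> N" using isi_props(5) unfolding maximal_star_ideal_def by blast
      then show False using notin N Ip(4) u0 by auto
    qed
  qed
  then have "z * u \<noteq> 0" using zn by simp
  then have "smult_set z K \<noteq> {0}" using uK unfolding smult_set_def
    by (metis imageI mult.commute singletonD)
  then have fzK: "frac_ideal D (smult_set z K)" using frac_integral smult_submodule[OF subK] zKD by blast
  have "star (smult_set z K) = smult_set z D" using st_smult[OF zn fK] sK by simp
  moreover have "star (smult_set z K) \<subseteq> I" using st_mono[OF fzK Ip(3) zKI] Ip(4) by simp
  moreover have "z \<in> smult_set z D" unfolding smult_set_def using D1 by (auto intro!: image_eqI[of _ _ 1])
  ultimately show ?thesis by blast
qed

end



context SD begin

lemma max_props:
  assumes "maximal_star_ideal D star M"
  shows "integral_star_ideal D star M" "M \<noteq> D" "1 \<notin> M" "submodule D M" "M \<subseteq> D"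
    "frac_ideal D M" "star M = M" "0 \<in> M" "M \<noteq> {0}"
  using assms isi_props isi_not1 unfolding maximal_star_ideal_def by auto

lemma max_max: "maximal_star_ideal D star M \<Longrightarrow> maximal_star_ideal D star N \<Longrightarrow> M \<subseteq> N \<Longrightarrow> N = M"
  unfolding maximal_star_ideal_def by blast

lemma max_prime:
  assumes M: "maximal_star_ideal D star M"
  shows "prime_ideal D M"
  unfolding prime_ideal_def
proof (intro conjI ballI impI)
  show "submodule D M" "M \<subseteq> D" "M \<noteq> D" using max_props[OF M] by auto
next
  fix a b assume ab: "a \<in> D" "b \<in> D" "a * b \<in> M"
  show "a \<in> M \<or> b \<in> M"
  proof (cases "a \<in> M")
    case False
    have "\<forall>N. maximal_star_ideal D star N \<and> M \<subseteq> N \<longrightarrow> a \<notin> N"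
      using max_max[OF M] False by blast
    then have "b \<in> M" using colon_lemma[OF max_props(1)[OF M] ab(2) ab(1) ab(3)] by blast
    then show ?thesis by simp
  qed simp
qed

lemma ideal_sum_submodule:
  assumes "submodule D I" "submodule D J"
  shows "submodule D (ideal_sum I J)"
  unfolding submodule_def ideal_sum_def
proof (intro conjI ballI)
  show "0 \<in> {j + l |j l. j \<in> I \<and> l \<in> J}" using assms unfolding submodule_def by force
next
  fix x y assume "x \<in> {j + l |j l. j \<in> I \<and> l \<in> J}" "y \<in> {j + l |j l. j \<in> I \<and> l \<in> J}"
  then obtain j1 l1 j2 l2 where h: "x = j1 + l1" "y = j2 + l2" "j1 \<in> I" "l1 \<in> J" "j2 \<in> I" "l2 \<in> J" by blast
  have "x + y = (j1 + j2) + (l1 + l2)" using h by (simp add: ac_simps)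
  then show "x + y \<in> {j + l |j l. j \<in> I \<and> l \<in> J}" using h assms unfolding submodule_def by blast
next
  fix d x assume "d \<in> D" "x \<in> {j + l |j l. j \<in> I \<and> l \<in> J}"
  then obtain j l where h: "x = j + l" "j \<in> I" "l \<in> J" by blast
  have "d * x = d * j + d * l" using h by (simp add: distrib_left)
  then show "d * x \<in> {j + l |j l. j \<in> I \<and> l \<in> J}" using h assms \<open>d \<in> D\<close> unfolding submodule_def by blast
qed

lemma ideal_sum_left: "0 \<in> J \<Longrightarrow> I \<subseteq> ideal_sum I J"
  unfolding ideal_sum_def by force

lemma ideal_sum_D: "I \<subseteq> D \<Longrightarrow> J \<subseteq> D \<Longrightarrow> ideal_sum I J \<subseteq> D"
  unfolding ideal_sum_def using Dadd by auto

lemma homog_unique: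
  assumes H: "star_homog D star I"
    and M1: "maximal_star_ideal D star M1" "I \<subseteq> M1"
    and M2: "maximal_star_ideal D star M2" "I \<subseteq> M2"
  shows "M1 = M2"
proof (rule ccontr)
  assume ne: "M1 \<noteq> M2"
  note P1 = max_props[OF M1(1)] and P2 = max_props[OF M2(1)]
  have "\<not> M1 \<subseteq> M2" using max_max[OF M1(1) M2(1)] ne by auto
  then obtain a where a: "a \<in> M1" "a \<notin> M2" by auto
  have aD: "a \<in> D" using a P1 by auto
  define A where "A = ideal_sum M2 (principal D a)"
  have subpa: "submodule D (principal D a)" unfolding principal_def submodule_def
    using D0 Dadd Dmul by (auto simp: distrib_left[symmetric] mult.left_commute intro: image_eqI)
  have subA: "submodule D A" unfolding A_def using ideal_sum_submodule[OF P2(4) subpa] .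
  have "0 \<in> principal D a" unfolding principal_def using D0 by (auto intro: image_eqI[of _ _ 0])
  then have M2A: "M2 \<subseteq> A" unfolding A_def using ideal_sum_left by blast
  have "principal D a \<subseteq> D" using aD Dmul unfolding principal_def by auto
  then have AD: "A \<subseteq> D" unfolding A_def using ideal_sum_D P2(5) by blast
  have fA: "frac_ideal D A" using frac_integral[OF subA AD] M2A P2 by blast
  have "a \<in> principal D a" unfolding principal_def using D1 by (auto intro!: image_eqI[of _ _ 1])
  then have aA: "a \<in> A" unfolding A_def ideal_sum_def using P2(8)
    by (metis (mono_tags, lifting) add_0 mem_Collect_eq)
  have sA: "star A = D"
  proof (rule ccontr)
    assume "star A \<noteq> D"
    have "star A = M2" using P2(1) M2(1) star_isi[OF fA AD] \<open>star A \<noteq> D\<close> M2A st_ext[OF fA]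
      unfolding maximal_star_ideal_def by blast
    then show False using a aA st_ext[OF fA] by blast
  qed
  then obtain J where J: "1 \<in> star J" "J \<subseteq> A" "J \<noteq> {0}" "finitely_generated D J"
    using fc[OF fA] D1 by blast
  obtain F where F: "finite F" "J = gen D F" using J(4) unfolding finitely_generated_def by blast
  have "\<forall>f\<in>F. \<exists>p. fst p \<in> M2 \<and> snd p \<in> D \<and> f = fst p + a * snd p"
  proof
    fix f assume "f \<in> F"
    then have "f \<in> A" using J F gen_incl by blast
    then obtain m d where "m \<in> M2" "d \<in> D" "f = m + a * d"
      unfolding A_def ideal_sum_def principal_def by blast
    then show "\<exists>p. fst p \<in> M2 \<and> snd p \<in> D \<and> f = fst p + a * snd p"
      by (intro exI[of _ "(m, d)"]) auto
  qed
  then obtain p where p: "\<forall>f\<in>F. fst (p f) \<in> M2 \<and> snd (p f) \<in> D \<and> f = fst (p f) + a * snd (p f)"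
    by metis
  define m where "m = (\<lambda>f. fst (p f))"
  define dd where "dd = (\<lambda>f. snd (p f))"
  have pm: "\<forall>f\<in>F. m f \<in> M2 \<and> dd f \<in> D \<and> f = m f + a * dd f" using p unfolding m_def dd_def by auto
  obtain F0 where F0: "finite F0" "gen D F0 \<noteq> {0}" "I = star (gen D F0)"
    using H unfolding star_homog_def finite_type_def finitely_generated_def by blast
  have fF0: "frac_ideal D (gen D F0)" using fg_frac F0 unfolding finitely_generated_def by blast
  have F0I: "F0 \<subseteq> I" using st_ext[OF fF0] F0(3) gen_incl by blast
  define G1 where "G1 = F0 \<union> {a}"
  define G2 where "G2 = F0 \<union> m ` F"
  have "G1 \<subseteq> M1" unfolding G1_def using F0I M1 a by auto
  then have gG1: "gen D G1 \<subseteq> M1" using gen_least P1(4) by blast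
  have "G2 \<subseteq> M2" unfolding G2_def using F0I M2 pm by auto
  then have gG2: "gen D G2 \<subseteq> M2" using gen_least P2(4) by blast
  have m01: "gen D F0 \<subseteq> gen D G1" "gen D F0 \<subseteq> gen D G2" unfolding G1_def G2_def
    by (auto intro: gen_mono[THEN subsetD])
  have finG: "finite G1" "finite G2" unfolding G1_def G2_def using F0(1) F(1) by auto
  have "0 \<in> gen D F0" using gen_submodule unfolding submodule_def by blast
  then have ne1: "gen D G1 \<noteq> {0}" and ne2: "gen D G2 \<noteq> {0}" using m01 F0(2) by blast+
  have fgG1: "finitely_generated D (gen D G1)" and fgG2: "finitely_generated D (gen D G2)"
    unfolding finitely_generated_def using finG by blast+
  have fg1: "frac_ideal D (gen D G1)" by (rule fg_frac[OF fgG1 ne1])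
  have fg2: "frac_ideal D (gen D G2)" by (rule fg_frac[OF fgG2 ne2])
  define J1 where "J1 = star (gen D G1)"
  define J2 where "J2 = star (gen D G2)"
  have J1M: "J1 \<subseteq> M1" unfolding J1_def using st_mono[OF fg1 P1(6) gG1] P1(7) by simp
  have J2M: "J2 \<subseteq> M2" unfolding J2_def using st_mono[OF fg2 P2(6) gG2] P2(7) by simp
  have isi1: "integral_star_ideal D star J1" unfolding J1_def
    by (rule star_isi[OF fg1]) (use gG1 P1(5) in blast)
  have isi2: "integral_star_ideal D star J2" unfolding J2_def
    by (rule star_isi[OF fg2]) (use gG2 P2(5) in blast)
  have ft1: "finite_type D star J1" unfolding J1_def finite_type_def using ne1 fgG1 by blast
  have ft2: "finite_type D star J2" unfolding J2_def finite_type_def using ne2 fgG2 by blast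
  have n1: "J1 \<noteq> D" using J1M P1(3) D1 by blast
  have n2: "J2 \<noteq> D" using J2M P2(3) D1 by blast
  have IJ1: "I \<subseteq> J1" unfolding J1_def F0(3) using st_mono[OF fF0 fg1 m01(1)] .
  have IJ2: "I \<subseteq> J2" unfolding J2_def F0(3) using st_mono[OF fF0 fg2 m01(2)] .
  have nD: "star (ideal_sum J1 J2) \<noteq> D"
    using H isi1 isi2 ft1 ft2 n1 n2 IJ1 IJ2 unfolding star_homog_def by blast
  note I1 = isi_props[OF isi1] and I2 = isi_props[OF isi2]
  have subS: "submodule D (ideal_sum J1 J2)" using ideal_sum_submodule I1 I2 by blast
  have SD: "ideal_sum J1 J2 \<subseteq> D" using ideal_sum_D I1 I2 by blast
  have "J1 \<subseteq> ideal_sum J1 J2" using ideal_sum_left I2 by blast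
  then have fS: "frac_ideal D (ideal_sum J1 J2)" using frac_integral[OF subS SD] I1 by blast
  have JS: "J \<subseteq> ideal_sum J1 J2"
  proof
    fix x assume "x \<in> J"
    then obtain G c where h: "finite G" "G \<subseteq> F" "\<forall>s\<in>G. c s \<in> D" "x = (\<Sum>s\<in>G. c s * s)"
      using F unfolding gen_def by blast
    have "x = (\<Sum>s\<in>G. c s * m s) + a * (\<Sum>s\<in>G. c s * dd s)"
    proof -
      have "x = (\<Sum>s\<in>G. c s * m s + a * (c s * dd s))" unfolding h(4)
      proof (rule sum.cong)
        fix s assume "s \<in> G"
        then have "s = m s + a * dd s" using pm h(2) by blast
        then show "c s * s = c s * m s + a * (c s * dd s)"
          by (metis distrib_left mult.left_commute)
      qed simp
      then show ?thesis by (simp add: sum.distrib sum_distrib_left)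
    qed
    moreover have "(\<Sum>s\<in>G. c s * m s) \<in> J2"
    proof -
      have "(\<Sum>s\<in>G. c s * m s) \<in> gen D G2"
        by (rule submodule_sum[OF gen_submodule h(1)])
          (use h pm gen_incl gen_submodule in \<open>auto simp: G2_def submodule_def\<close>)
      then show ?thesis unfolding J2_def using st_ext[OF fg2] by blast
    qed
    moreover have "a * (\<Sum>s\<in>G. c s * dd s) \<in> J1"
    proof -
      have "(\<Sum>s\<in>G. c s * dd s) \<in> D" using h pm by (intro sum_D) (auto intro: Dmul)
      moreover have "a \<in> gen D G1" unfolding G1_def by (rule gen_incl) simp
      ultimately have "a * (\<Sum>s\<in>G. c s * dd s) \<in> gen D G1"
        using gen_submodule unfolding submodule_def by (metis mult.commute)
      then show ?thesis unfolding J1_def using st_ext[OF fg1] by blast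
    qed
    ultimately have "x = a * (\<Sum>s\<in>G. c s * dd s) + (\<Sum>s\<in>G. c s * m s)"
      "(\<Sum>s\<in>G. c s * m s) \<in> J2" "a * (\<Sum>s\<in>G. c s * dd s) \<in> J1" by (simp_all add: add.commute)
    then show "x \<in> ideal_sum J1 J2" unfolding ideal_sum_def by blast
  qed
  have fJ: "frac_ideal D J" using fg_frac J by blast
  have "1 \<in> star (ideal_sum J1 J2)" using st_mono[OF fJ fS JS] J by blast
  moreover have "star (ideal_sum J1 J2) \<subseteq> D" using star_integral[OF fS SD] .
  moreover have "submodule D (star (ideal_sum J1 J2))" using st_frac[OF fS] unfolding frac_ideal_def by blast
  ultimately show False using submodule_one nD by blast
qed

lemma M_of_props:
  assumes H: "star_homog D star I"
  shows "maximal_star_ideal D star (M_of D star I)" "I \<subseteq> M_of D star I"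
    "\<And>N. maximal_star_ideal D star N \<Longrightarrow> I \<subseteq> N \<Longrightarrow> N = M_of D star I"
proof -
  have isi: "integral_star_ideal D star I" "I \<noteq> D" using H unfolding star_homog_def by auto
  obtain N where N: "maximal_star_ideal D star N" "I \<subseteq> N"
    using max_exists[OF isi_props(3,2)[OF isi(1)]] isi_props(4)[OF isi(1)] isi(2) by auto
  have "maximal_star_ideal D star (M_of D star I) \<and> I \<subseteq> M_of D star I \<and> M_of D star I = N"
    unfolding M_of_def by (rule theI2[of _ N]) (use N homog_unique[OF H] in auto)
  then show "maximal_star_ideal D star (M_of D star I)" "I \<subseteq> M_of D star I"
    "\<And>N'. maximal_star_ideal D star N' \<Longrightarrow> I \<subseteq> N' \<Longrightarrow> N' = M_of D star I"
    using homog_unique[OF H] N by auto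
qed

end



context SD begin

lemma Dpow: "y \<in> D \<Longrightarrow> y ^ n \<in> D"
  by (induction n) (auto intro: Dmul D1)

lemma prime_pow: "prime_ideal D Q \<Longrightarrow> y \<in> D \<Longrightarrow> y ^ n \<in> Q \<Longrightarrow> y \<in> Q"
proof (induction n)
  case 0
  then have "1 \<in> Q" by simp
  then show ?case using 0 submodule_one unfolding prime_ideal_def by blast
next
  case (Suc n)
  then show ?case using Dpow[of y n] unfolding prime_ideal_def by auto
qed

definition intg :: "'k set \<Rightarrow> bool" where
  "intg I \<longleftrightarrow> submodule D I \<and> I \<subseteq> D \<and> I \<noteq> {0}"

lemma ideal_prod_intg: "intg J \<Longrightarrow> intg L \<Longrightarrow> intg (ideal_prod D J L)"
  unfolding intg_def ideal_prod_def
proof (intro conjI)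
  assume J: "submodule D J \<and> J \<subseteq> D \<and> J \<noteq> {0}" and L: "submodule D L \<and> L \<subseteq> D \<and> L \<noteq> {0}"
  show "submodule D (gen D {j * l |j l. j \<in> J \<and> l \<in> L})" by (rule gen_submodule)
  show "gen D {j * l |j l. j \<in> J \<and> l \<in> L} \<subseteq> D"
    using J L Dmul by (intro gen_least[OF submodule_D]) auto
  obtain j where "j \<in> J" "j \<noteq> 0" using J unfolding submodule_def by blast
  moreover obtain l where "l \<in> L" "l \<noteq> 0" using L unfolding submodule_def by blast
  ultimately have "j * l \<in> gen D {j * l |j l. j \<in> J \<and> l \<in> L}" "j * l \<noteq> 0"
    by (auto intro: gen_incl)
  then show "gen D {j * l |j l. j \<in> J \<and> l \<in> L} \<noteq> {0}" by blast
qed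

lemma intg_D: "intg D"
  unfolding intg_def using submodule_D D1 by auto

lemma prod_list_intg: "\<forall>I\<in>set Is. intg I \<Longrightarrow> intg (ideal_prod_list D Is)"
  by (induction Is) (auto simp: ideal_prod_list_def intg_D intro: ideal_prod_intg)

lemma prod_list_prime:
  assumes Q: "prime_ideal D Q"
  shows "\<forall>I\<in>set Is. intg I \<Longrightarrow> ideal_prod_list D Is \<subseteq> Q \<Longrightarrow> \<exists>I\<in>set Is. I \<subseteq> Q"
proof (induction Is)
  case Nil
  then have "1 \<in> Q" using D1 by (auto simp: ideal_prod_list_def)
  then show ?case using Q submodule_one unfolding prime_ideal_def by blast
next
  case (Cons I Is)
  show ?case
  proof (cases "I \<subseteq> Q")
    case True then show ?thesis by simp
  next
    case False
    then obtain j where j: "j \<in> I" "j \<notin> Q" by auto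
    show ?thesis
    proof (cases "ideal_prod_list D Is \<subseteq> Q")
      case True then show ?thesis using Cons by auto
    next
      case False
      then obtain l where l: "l \<in> ideal_prod_list D Is" "l \<notin> Q" by auto
      have iI: "intg I" and iR: "intg (ideal_prod_list D Is)" using Cons prod_list_intg by auto
      have "j * l \<in> ideal_prod D I (ideal_prod_list D Is)"
        unfolding ideal_prod_def using j l by (auto intro: gen_incl)
      moreover have "ideal_prod D I (ideal_prod_list D Is) \<subseteq> Q" using Cons.prems by (simp add: ideal_prod_list_def)
      ultimately have "j * l \<in> Q" by blast
      moreover have "j \<in> D" "l \<in> D" using iI iR j l unfolding intg_def by auto
      ultimately show ?thesis using Q j l unfolding prime_ideal_def by blast
    qed
  qed
qed

lemma homog_intg: "star_homog D star I \<Longrightarrow> intg I"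
  unfolding star_homog_def intg_def using isi_props by blast

lemma one_loc: "1 \<notin> M \<Longrightarrow> 1 \<in> localization D M"
  unfolding localization_def using D1 by (auto intro!: exI[of _ 1])

theorem forward:
  assumes T: "star_SH_type1 D star"
  shows "star_weakly_Krull D star"
  unfolding star_weakly_Krull_def
proof (intro conjI allI impI)
  show "star_SH D star" using T unfolding star_SH_type1_def star_SH_def star_homog_type1_def by blast
next
  fix M assume M: "maximal_star_ideal D star M"
  note MP = max_props[OF M]
  have pM: "prime_ideal D M" using max_prime[OF M] .
  show "height_one D M" unfolding height_one_def
  proof (intro conjI allI impI)
    show "prime_ideal D M" "M \<noteq> {0}" using pM MP by auto
  next
    fix Q assume Q: "prime_ideal D Q \<and> Q \<subseteq> M"
    show "Q = {0} \<or> Q = M"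
    proof (cases "Q = {0}")
      case False
      have sQ: "submodule D Q" "Q \<subseteq> D" using Q unfolding prime_ideal_def by auto
      obtain x where x: "x \<in> Q" "x \<noteq> 0" using False sQ unfolding submodule_def by blast
      have xD: "x \<in> D" using x sQ by auto
      have nu: "\<not> is_unit_in D x"
      proof
        assume "is_unit_in D x"
        then obtain y where "y \<in> D" "x * y = 1" unfolding is_unit_in_def by blast
        then have "1 \<in> M" using MP(4) x Q unfolding submodule_def by (metis mult.commute subsetD)
        then show False using MP by simp
      qed
      obtain Is where Is: "\<forall>I\<in>set Is. star_homog_type1 D star I"
        "principal D x = star (ideal_prod_list D Is)"
        using T xD x nu unfolding star_SH_type1_def by blast
      have iIs: "\<forall>I\<in>set Is. intg I" using Is homog_intg unfolding star_homog_type1_def by blast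
      have iP: "intg (ideal_prod_list D Is)" using prod_list_intg[OF iIs] .
      then have "ideal_prod_list D Is \<subseteq> principal D x"
        using Is(2) st_ext frac_integral unfolding intg_def by metis
      also have "principal D x \<subseteq> Q" unfolding principal_def using sQ x
        unfolding submodule_def by (auto simp: mult.commute)
      finally obtain I where I: "I \<in> set Is" "I \<subseteq> Q"
        using prod_list_prime[OF conjunct1[OF Q] iIs] by blast
      have t1: "star_homog_type1 D star I" using Is I by auto
      then have H: "star_homog D star I" unfolding star_homog_type1_def by auto
      have MI: "M = M_of D star I" using M_of_props(3)[OF H M] I Q by blast
      have "M \<subseteq> Q"
      proof
        fix y assume y: "y \<in> M"
        show "y \<in> Q"
        proof (cases "y = 0")
          case True then show ?thesis using sQ unfolding submodule_def by simp
        next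
          case False
          then obtain n where n: "n > 0" "smult_set (y ^ n) (localization D M) \<inter> D \<subseteq> I"
            using t1 y MI unfolding star_homog_type1_def by auto
          have yD: "y \<in> D" using y MP by auto
          have "y ^ n \<in> smult_set (y ^ n) (localization D M)"
            unfolding smult_set_def using one_loc[OF MP(3)] by (auto intro!: image_eqI[of _ _ 1])
          then have "y ^ n \<in> Q" using n I Dpow[OF yD] by blast
          then show ?thesis using prime_pow Q yD by blast
        qed
      qed
      then show ?thesis using Q by auto
    qed simp
  qed
qed

end



context SD begin

lemma union_chain_submodule:
  assumes "C \<noteq> {}" "\<forall>X\<in>C. submodule D X" "\<forall>X\<in>C. \<forall>Y\<in>C. X \<subseteq> Y \<or> Y \<subseteq> X"
  shows "submodule D (\<Union>C)"
  unfolding submodule_def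
proof (intro conjI ballI)
  show "0 \<in> \<Union>C" using assms unfolding submodule_def by blast
next
  fix a b assume "a \<in> \<Union>C" "b \<in> \<Union>C"
  then obtain X Y where XY: "X \<in> C" "Y \<in> C" "a \<in> X" "b \<in> Y" by auto
  show "a + b \<in> \<Union>C"
  proof (cases "X \<subseteq> Y")
    case True then show ?thesis using XY assms unfolding submodule_def by blast
  next
    case False then have "Y \<subseteq> X" using assms XY by blast
    then show ?thesis using XY assms unfolding submodule_def by blast
  qed
next
  fix d a assume "d \<in> D" "a \<in> \<Union>C"
  then show "d * a \<in> \<Union>C" using assms unfolding submodule_def by blast
qed

lemma principal_submodule: "submodule D (principal D a)"
  unfolding principal_def submodule_def
  using D0 Dadd Dmul by (auto simp: distrib_left[symmetric] mult.left_commute intro: image_eqI)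

lemma radical_lemma:
  assumes M: "maximal_star_ideal D star M" and h1: "height_one D M"
    and I: "intg I" "I \<subseteq> M" and y: "y \<in> M"
  shows "\<exists>n s. s \<in> D \<and> s \<notin> M \<and> y ^ n * s \<in> I"
proof (rule ccontr)
  assume nex: "\<not> ?thesis"
  note MP = max_props[OF M]
  have pM: "prime_ideal D M" using max_prime[OF M] .
  have yD: "y \<in> D" using y MP by auto
  define S where "S = {y ^ n * s | n s. s \<in> D \<and> s \<notin> M}"
  define A where "A = {P. submodule D P \<and> P \<subseteq> D \<and> I \<subseteq> P \<and> P \<inter> S = {}}"
  have IA: "I \<in> A" unfolding A_def S_def using I nex unfolding intg_def by auto
  have "\<forall>C\<in>chains A. \<exists>U\<in>A. \<forall>X\<in>C. X \<subseteq> U"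
  proof
    fix C assume C: "C \<in> chains A"
    show "\<exists>U\<in>A. \<forall>X\<in>C. X \<subseteq> U"
    proof (cases "C = {}")
      case True then show ?thesis using IA by auto
    next
      case False
      have CA: "C \<subseteq> A" and ch: "\<forall>X\<in>C. \<forall>Y\<in>C. X \<subseteq> Y \<or> Y \<subseteq> X"
        using C unfolding chains_def chain_subset_def by auto
      have "submodule D (\<Union>C)" using union_chain_submodule[OF False _ ch] CA unfolding A_def by auto
      moreover have "\<Union>C \<subseteq> D" "\<Union>C \<inter> S = {}" using CA unfolding A_def by auto
      moreover have "I \<subseteq> \<Union>C" using CA False unfolding A_def by auto
      ultimately have "\<Union>C \<in> A" unfolding A_def by auto
      then show ?thesis by auto
    qed
  qed
  then obtain P where P: "P \<in> A" "\<forall>X\<in>A. P \<subseteq> X \<longrightarrow> X = P" using Zorn_Lemma2[of A] by blast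
  have sP: "submodule D P" "P \<subseteq> D" "I \<subseteq> P" "P \<inter> S = {}" using P unfolding A_def by auto
  have ext: "\<exists>p d n s. p \<in> P \<and> d \<in> D \<and> s \<in> D \<and> s \<notin> M \<and> p + a * d = y ^ n * s"
    if a: "a \<in> D" "a \<notin> P" for a
  proof (rule ccontr)
    assume ne: "\<not> ?thesis"
    define Pa where "Pa = ideal_sum P (principal D a)"
    have "submodule D Pa" unfolding Pa_def using ideal_sum_submodule sP principal_submodule by blast
    moreover have "principal D a \<subseteq> D" using a Dmul unfolding principal_def by auto
    then have "Pa \<subseteq> D" unfolding Pa_def using ideal_sum_D sP by blast
    moreover have "0 \<in> principal D a" unfolding principal_def using D0 by (auto intro: image_eqI[of _ _ 0])
    then have PPa: "P \<subseteq> Pa" unfolding Pa_def using ideal_sum_left by blast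
    moreover have "Pa \<inter> S = {}" unfolding Pa_def ideal_sum_def principal_def S_def using ne by auto
    ultimately have "Pa \<in> A" unfolding A_def using sP by auto
    then have "Pa = P" using P PPa by auto
    moreover have "a \<in> Pa" unfolding Pa_def ideal_sum_def principal_def using sP D1 a
      unfolding submodule_def by (metis (mono_tags, lifting) add_0 image_eqI mem_Collect_eq mult.right_neutral)
    ultimately show False using a by auto
  qed
  have primeP: "prime_ideal D P"
    unfolding prime_ideal_def
  proof (intro conjI ballI impI)
    show "submodule D P" "P \<subseteq> D" using sP by auto
    have "(1::'k) = y ^ 0 * 1" by simp
    then have "1 \<in> S" unfolding S_def using D1 MP(3) by blast
    then show "P \<noteq> D" using sP D1 by auto
  next
    fix a b assume ab: "a \<in> D" "b \<in> D" "a * b \<in> P"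
    show "a \<in> P \<or> b \<in> P"
    proof (rule ccontr)
      assume "\<not> (a \<in> P \<or> b \<in> P)"
      then obtain p1 d1 n1 s1 p2 d2 n2 s2 where
        e: "p1 \<in> P" "d1 \<in> D" "s1 \<in> D" "s1 \<notin> M" "p1 + a * d1 = y ^ n1 * s1"
           "p2 \<in> P" "d2 \<in> D" "s2 \<in> D" "s2 \<notin> M" "p2 + b * d2 = y ^ n2 * s2"
        using ext ab by meson
      have eq: "(p1 + a * d1) * (p2 + b * d2) = p1 * (p2 + b * d2) + (a * d1) * p2 + (a * b) * (d1 * d2)"
        by (simp add: algebra_simps)
      have cl: "\<And>d q. d \<in> D \<Longrightarrow> q \<in> P \<Longrightarrow> q * d \<in> P"
        using sP(1) unfolding submodule_def by (metis mult.commute)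
      have "p2 \<in> D" using e sP by auto
      then have "p2 + b * d2 \<in> D" using Dadd Dmul e(7) ab(2) by blast
      moreover have "a * d1 \<in> D" "d1 * d2 \<in> D" using Dmul e ab by auto
      ultimately have "p1 * (p2 + b * d2) \<in> P" "p2 * (a * d1) \<in> P" "(a * b) * (d1 * d2) \<in> P"
        using cl e ab by auto
      then have t: "p1 * (p2 + b * d2) \<in> P" "(a * d1) * p2 \<in> P" "(a * b) * (d1 * d2) \<in> P"
        by (simp_all add: mult.commute)
      have addP: "\<And>u v. u \<in> P \<Longrightarrow> v \<in> P \<Longrightarrow> u + v \<in> P" using sP(1) unfolding submodule_def by blast
      have "(p1 + a * d1) * (p2 + b * d2) \<in> P" unfolding eq by (intro addP t)
      moreover have "(p1 + a * d1) * (p2 + b * d2) = y ^ (n1 + n2) * (s1 * s2)"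
        using e by (simp add: power_add ac_simps)
      moreover have "s1 * s2 \<in> D" "s1 * s2 \<notin> M" using e Dmul pM unfolding prime_ideal_def by auto
      ultimately show False using sP(4) unfolding S_def by blast
    qed
  qed
  have PM: "P \<subseteq> M"
  proof
    fix p assume "p \<in> P"
    show "p \<in> M"
    proof (rule ccontr)
      assume "p \<notin> M"
      moreover have "p = y ^ 0 * p" by simp
      ultimately have "p \<in> S" unfolding S_def using \<open>p \<in> P\<close> sP by blast
      then show False using sP \<open>p \<in> P\<close> by auto
    qed
  qed
  have "P \<noteq> {0}" using sP(3) I unfolding intg_def submodule_def by blast
  then have "P = M" using h1 primeP PM unfolding height_one_def by blast
  moreover have "y = y ^ 1 * 1" by simp
  then have "y \<in> S" unfolding S_def using D1 MP(3) by blast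
  ultimately show False using y sP by auto
qed

lemma homog_type1:
  assumes H: "star_homog D star I" and h1: "height_one D (M_of D star I)"
  shows "star_homog_type1 D star I"
  unfolding star_homog_type1_def
proof (intro conjI ballI H)
  let ?M = "M_of D star I"
  note MO = M_of_props[OF H]
  note MP = max_props[OF MO(1)]
  have pM: "prime_ideal D ?M" using max_prime[OF MO(1)] .
  have isi: "integral_star_ideal D star I" using H unfolding star_homog_def by auto
  note IP = isi_props[OF isi]
  fix y assume y: "y \<in> ?M - {0}"
  have yD: "y \<in> D" using y MP by auto
  obtain n s where ns: "s \<in> D" "s \<notin> ?M" "y ^ n * s \<in> I"
    using radical_lemma[OF MO(1) h1 homog_intg[OF H] MO(2)] y by blast
  show "\<exists>n>0. smult_set (y ^ n) (localization D ?M) \<inter> D \<subseteq> I"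
  proof (intro exI[of _ "Suc n"] conjI subsetI)
    fix z assume z: "z \<in> smult_set (y ^ Suc n) (localization D ?M) \<inter> D"
    then obtain a t where at: "a \<in> D" "t \<in> D" "t \<notin> ?M" "z = y ^ Suc n * (a / t)"
      unfolding smult_set_def localization_def by blast
    have t0: "t \<noteq> 0" using at MP by auto
    have "(s * t) * z = (y * a) * (y ^ n * s)" using at t0 by (simp add: field_simps)
    moreover have "y * a \<in> D" using yD at Dmul by auto
    ultimately have uz: "(s * t) * z \<in> I" using ns IP(1) unfolding submodule_def by metis
    have uD: "s * t \<in> D" using ns at Dmul by auto
    have uM: "s * t \<notin> ?M" using ns at pM unfolding prime_ideal_def by auto
    have "\<forall>N. maximal_star_ideal D star N \<and> I \<subseteq> N \<longrightarrow> s * t \<notin> N"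
      using MO(3) uM by blast
    then show "z \<in> I" using colon_lemma[OF isi _ uD uz] z by blast
  qed simp
qed

theorem backward:
  assumes W: "star_weakly_Krull D star"
  shows "star_SH_type1 D star"
  unfolding star_SH_type1_def
proof (intro ballI impI)
  fix x assume "x \<in> D" "x \<noteq> 0 \<and> \<not> is_unit_in D x"
  then obtain Is where Is: "\<forall>I\<in>set Is. star_homog D star I" "principal D x = star (ideal_prod_list D Is)"
    using W unfolding star_weakly_Krull_def star_SH_def by blast
  have "\<forall>I\<in>set Is. star_homog_type1 D star I"
    using Is(1) homog_type1 W M_of_props(1) unfolding star_weakly_Krull_def by blast
  then show "\<exists>Is. (\<forall>I\<in>set Is. star_homog_type1 D star I) \<and> principal D x = star (ideal_prod_list D Is)"
    using Is by blast
qed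

end


theorem theoremP2:
  fixes D :: "'k::field set" and star :: "'k set \<Rightarrow> 'k set"
  assumes "integral_domain_qf D"
    and "star_operation D star"
    and "finite_character D star"
  shows "star_SH_type1 D star \<longleftrightarrow> star_weakly_Krull D star"
proof -
  interpret SD D star using assms by unfold_locales
  show ?thesis using forward backward by blast
qed

end
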